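(* Fix an integer $t\ge 1$ and let $(\rho,y)$ be the principal eigenpair of the $t$-pleated bowtie $B_t$. Then the set of vertices of spectral rank 1 in $B_t$ (i.e. the vertices $v$ at which $y_v$ attains its maximum) is exactly $\{r_1,r_2\}$ if and only if \[ t<\rho\sqrt{\rho-1}-1 . \]
   Context: For a connected $k$-uniform hypergraph $H=([n],E)$ and $x\in\mathbb{R}^n$, write $x^e=\prod_{v\in e}x_v$ and $F_H(x)=k\sum_{e\in E}x^e$. The principal eigenpair $(\rho,y)$ of $H$ is the unique pair with $y$ strictly positive, $\|y\|_k=1$, satisfying $\rho\, y_i^{k-1}=\sum_{e\in E,\, i\in e} y^{e\setminus\{i\}}$ for all $i$; equivalently $\rho=\max_{\|z\|_k^k=1}F_H(z)$ with $y$ the unique positive maximizer. The $t$-pleated bowtie $B_t$ is the $3$-uniform hypergraph on the $2t+5$ vertices $c,\ell_1,\dots,\ell_{t+2},r_1,\dots,r_{t+2}$ with edge set \[ \{\{c,r_1,r_2\}\}\cup\{\{c,\ell_1,\ell_j\}: 2\le j\le t+2\}\cup\{\{r_1,r_2,r_j\}: 3\le j\le t+2\}, \] so $\{c,\ell_1\}$ lies in $t+1$ edges and $\{r_1,r_2\}$ lies in $t+1$ edges. The spectral rank of a vertex is its position when vertices are ordered by decreasing value of the principal eigenvector (tied vertices share a rank); spectral rank 1 vertices are those with the largest entry. *)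

theory Defs
  imports Complex_Main
begin

text \<open>General k-uniform hypergraphs: vertex set V, edge set E (a set of k-element subsets of V).
  A vector is a function from vertices to reals (only values on V matter).\<close>

definition principal_eigenpair ::
  "nat \<Rightarrow> 'v set \<Rightarrow> 'v set set \<Rightarrow> real \<Rightarrow> ('v \<Rightarrow> real) \<Rightarrow> bool" where
  "principal_eigenpair k V E \<rho> y \<longleftrightarrow>
     (\<forall>v\<in>V. y v > 0) \<and>
     (\<Sum>v\<in>V. y v ^ k) = 1 \<and>
     (\<forall>i\<in>V. \<rho> * y i ^ (k - 1) = (\<Sum>e\<in>{e\<in>E. i \<in> e}. \<Prod>u\<in>e - {i}. y u))"

definition spectral_rank_one :: "'v set \<Rightarrow> ('v \<Rightarrow> real) \<Rightarrow> 'v set" where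
  "spectral_rank_one V y = {v\<in>V. \<forall>u\<in>V. y u \<le> y v}"

datatype bvert = C | L nat | R nat

definition bowtie_V :: "nat \<Rightarrow> bvert set" where
  "bowtie_V t = {C} \<union> L ` {1..t+2} \<union> R ` {1..t+2}"

definition bowtie_E :: "nat \<Rightarrow> bvert set set" where
  "bowtie_E t = {{C, R 1, R 2}}
     \<union> {{C, L 1, L j} | j. 2 \<le> j \<and> j \<le> t + 2}
     \<union> {{R 1, R 2, R j} | j. 3 \<le> j \<and> j \<le> t + 2}"

end

theory Submission imports Defs begin

lemma E_eq: "bowtie_E t = {{C,R 1,R 2}} \<union> (\<lambda>j. {C,L 1,L j}) ` {2..t+2} \<union> (\<lambda>j. {R 1,R 2,R j}) ` {3..t+2}"
  unfolding bowtie_E_def by auto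

lemma injB: "inj_on (\<lambda>j. {C,L 1,L j}) {2..t+2}"
proof (rule inj_onI)
  fix j k assume j: "j \<in> {2..t+2}" and "k \<in> {2..t+2}" and eq: "{C,L 1,L j} = {C,L 1,L k}"
  have "L j \<in> {C,L 1,L k}" using eq by blast
  thus "j = k" using j by auto
qed

lemma injD: "inj_on (\<lambda>j. {R 1,R 2,R j}) {3..t+2}"
proof (rule inj_onI)
  fix j k assume j: "j \<in> {3..t+2}" and "k \<in> {3..t+2}" and eq: "{R 1,R 2,R j} = {R 1,R 2,R k}"
  have "R j \<in> {R 1,R 2,R k}" using eq by blast
  thus "j = k" using j by auto
qed

lemma inc_C: "{e\<in>bowtie_E t. C\<in>e} = insert {C,R 1,R 2} ((\<lambda>j. {C,L 1,L j}) ` {2..t+2})"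
  unfolding E_eq by auto
lemma inc_L1: "{e\<in>bowtie_E t. L 1\<in>e} = (\<lambda>j. {C,L 1,L j}) ` {2..t+2}"
  unfolding E_eq by auto
lemma inc_Lj: "2\<le>j \<Longrightarrow> j\<le>t+2 \<Longrightarrow> {e\<in>bowtie_E t. L j\<in>e} = {{C,L 1,L j}}"
  unfolding E_eq by auto
lemma inc_R1: "{e\<in>bowtie_E t. R 1\<in>e} = insert {C,R 1,R 2} ((\<lambda>j. {R 1,R 2,R j}) ` {3..t+2})"
  unfolding E_eq by auto
lemma inc_R2: "{e\<in>bowtie_E t. R 2\<in>e} = insert {C,R 1,R 2} ((\<lambda>j. {R 1,R 2,R j}) ` {3..t+2})"
  unfolding E_eq by auto
lemma inc_Rj: "3\<le>j \<Longrightarrow> j\<le>t+2 \<Longrightarrow> {e\<in>bowtie_E t. R j\<in>e} = {{R 1,R 2,R j}}"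
  unfolding E_eq by auto

lemma sum_C: "(\<Sum>e\<in>{e\<in>bowtie_E t. C\<in>e}. \<Prod>u\<in>e-{C}. y u) = y (R 1) * y (R 2) + (\<Sum>j=2..t+2. y (L 1) * y (L j))"
proof -
  have nm: "{C,R 1,R 2} \<notin> (\<lambda>j. {C,L 1,L j}) ` {2..t+2}" by auto
  have "(\<Sum>e\<in>{e\<in>bowtie_E t. C\<in>e}. \<Prod>u\<in>e-{C}. y u) = (\<Prod>u\<in>{C,R 1,R 2}-{C}. y u) + sum ((\<lambda>e. \<Prod>u\<in>e-{C}. y u) \<circ> (\<lambda>j. {C,L 1,L j})) {2..t+2}"
    unfolding inc_C by (simp only: sum.insert[OF finite_imageI[OF finite_atLeastAtMost] nm] sum.reindex[OF injB])
  also have "sum ((\<lambda>e. \<Prod>u\<in>e-{C}. y u) \<circ> (\<lambda>j. {C,L 1,L j})) {2..t+2} = (\<Sum>j=2..t+2. y (L 1) * y (L j))"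
  proof (rule sum.cong)
    fix j assume j: "j \<in> {2..t+2}"
    hence "{C,L 1,L j} - {C} = {L 1, L j}" "L 1 \<noteq> L j" by auto
    thus "((\<lambda>e. \<Prod>u\<in>e-{C}. y u) \<circ> (\<lambda>j. {C,L 1,L j})) j = y (L 1) * y (L j)" by simp
  qed simp
  also have "{C,R 1,R 2}-{C} = {R 1, R 2}" by auto
  finally show ?thesis by simp
qed

lemma sum_L1: "(\<Sum>e\<in>{e\<in>bowtie_E t. L 1\<in>e}. \<Prod>u\<in>e-{L 1}. y u) = (\<Sum>j=2..t+2. y C * y (L j))"
proof -
  have "(\<Sum>e\<in>{e\<in>bowtie_E t. L 1\<in>e}. \<Prod>u\<in>e-{L 1}. y u) = sum ((\<lambda>e. \<Prod>u\<in>e-{L 1}. y u) \<circ> (\<lambda>j. {C,L 1,L j})) {2..t+2}"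
    unfolding inc_L1 using injB by (simp only: sum.reindex)
  also have "\<dots> = (\<Sum>j=2..t+2. y C * y (L j))"
  proof (rule sum.cong)
    fix j assume j: "j \<in> {2..t+2}"
    hence "{C,L 1,L j} - {L 1} = {C, L j}" by auto
    thus "((\<lambda>e. \<Prod>u\<in>e-{L 1}. y u) \<circ> (\<lambda>j. {C,L 1,L j})) j = y C * y (L j)" by simp
  qed simp
  finally show ?thesis .
qed

lemma sum_Lj: "2\<le>j \<Longrightarrow> j\<le>t+2 \<Longrightarrow> (\<Sum>e\<in>{e\<in>bowtie_E t. L j\<in>e}. \<Prod>u\<in>e-{L j}. y u) = y C * y (L 1)"
proof -
  assume "2\<le>j" "j\<le>t+2"
  moreover have "{C,L 1,L j} - {L j} = {C, L 1}" using \<open>2\<le>j\<close> by auto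
  ultimately show ?thesis by (simp add: inc_Lj)
qed

lemma sum_R1: "(\<Sum>e\<in>{e\<in>bowtie_E t. R 1\<in>e}. \<Prod>u\<in>e-{R 1}. y u) = y C * y (R 2) + (\<Sum>j=3..t+2. y (R 2) * y (R j))"
proof -
  have nm: "{C,R 1,R 2} \<notin> (\<lambda>j. {R 1,R 2,R j}) ` {3..t+2}" by auto
  have "(\<Sum>e\<in>{e\<in>bowtie_E t. R 1\<in>e}. \<Prod>u\<in>e-{R 1}. y u) = (\<Prod>u\<in>{C,R 1,R 2}-{R 1}. y u) + sum ((\<lambda>e. \<Prod>u\<in>e-{R 1}. y u) \<circ> (\<lambda>j. {R 1,R 2,R j})) {3..t+2}"
    unfolding inc_R1 by (simp only: sum.insert[OF finite_imageI[OF finite_atLeastAtMost] nm] sum.reindex[OF injD])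
  also have "sum ((\<lambda>e. \<Prod>u\<in>e-{R 1}. y u) \<circ> (\<lambda>j. {R 1,R 2,R j})) {3..t+2} = (\<Sum>j=3..t+2. y (R 2) * y (R j))"
  proof (rule sum.cong)
    fix j assume j: "j \<in> {3..t+2}"
    hence "{R 1,R 2,R j} - {R 1} = {R 2, R j}" "R 2 \<noteq> R j" by auto
    thus "((\<lambda>e. \<Prod>u\<in>e-{R 1}. y u) \<circ> (\<lambda>j. {R 1,R 2,R j})) j = y (R 2) * y (R j)" by simp
  qed simp
  also have "{C,R 1,R 2}-{R 1} = {C, R 2}" by auto
  finally show ?thesis by simp
qed

lemma sum_R2: "(\<Sum>e\<in>{e\<in>bowtie_E t. R 2\<in>e}. \<Prod>u\<in>e-{R 2}. y u) = y C * y (R 1) + (\<Sum>j=3..t+2. y (R 1) * y (R j))"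
proof -
  have nm: "{C,R 1,R 2} \<notin> (\<lambda>j. {R 1,R 2,R j}) ` {3..t+2}" by auto
  have "(\<Sum>e\<in>{e\<in>bowtie_E t. R 2\<in>e}. \<Prod>u\<in>e-{R 2}. y u) = (\<Prod>u\<in>{C,R 1,R 2}-{R 2}. y u) + sum ((\<lambda>e. \<Prod>u\<in>e-{R 2}. y u) \<circ> (\<lambda>j. {R 1,R 2,R j})) {3..t+2}"
    unfolding inc_R2 by (simp only: sum.insert[OF finite_imageI[OF finite_atLeastAtMost] nm] sum.reindex[OF injD])
  also have "sum ((\<lambda>e. \<Prod>u\<in>e-{R 2}. y u) \<circ> (\<lambda>j. {R 1,R 2,R j})) {3..t+2} = (\<Sum>j=3..t+2. y (R 1) * y (R j))"
  proof (rule sum.cong)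
    fix j assume j: "j \<in> {3..t+2}"
    hence "{R 1,R 2,R j} - {R 2} = {R 1, R j}" "R 1 \<noteq> R j" by auto
    thus "((\<lambda>e. \<Prod>u\<in>e-{R 2}. y u) \<circ> (\<lambda>j. {R 1,R 2,R j})) j = y (R 1) * y (R j)" by simp
  qed simp
  also have "{C,R 1,R 2}-{R 2} = {C, R 1}" by auto
  finally show ?thesis by simp
qed

lemma sum_Rj: "3\<le>j \<Longrightarrow> j\<le>t+2 \<Longrightarrow> (\<Sum>e\<in>{e\<in>bowtie_E t. R j\<in>e}. \<Prod>u\<in>e-{R j}. y u) = y (R 1) * y (R 2)"
proof -
  assume "3\<le>j" "j\<le>t+2"
  moreover have "{R 1,R 2,R j} - {R j} = {R 1, R 2}" using \<open>3\<le>j\<close> by auto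
  ultimately show ?thesis by (simp add: inc_Rj)
qed


lemma sqrt_lt: "0 \<le> (x::real) \<Longrightarrow> x < sqrt y \<longleftrightarrow> x^2 < y"
  by (metis real_sqrt_less_iff real_sqrt_unique)

lemma alg:
  fixes c a l r \<rho> T :: real
  assumes pos: "c>0" "a>0" "l>0" "\<rho>>0"
    and E1: "\<rho>*c^2 = r^2 + T*a*l" and E2: "\<rho>*a^2 = T*c*l" and E3: "\<rho>*l^2 = c*a"
  shows "\<rho>^3*a^3 = T^2*c^3" and "\<rho>^2*r^2 = c^2*(\<rho>^3 - T^2)"
proof -
  have "a*(\<rho>^3*a^3) = \<rho>*(\<rho>*a^2)^2" by (simp add: power2_eq_square power3_eq_cube)
  also have "\<dots> = \<rho>*(T*c*l)^2" using E2 by simp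
  also have "\<dots> = T^2*c^2*(\<rho>*l^2)" by (simp add: power2_eq_square)
  also have "\<dots> = a*(T^2*c^3)" using E3 by (simp add: power2_eq_square power3_eq_cube)
  finally show A: "\<rho>^3*a^3 = T^2*c^3" using pos by simp
  have "c*(\<rho>*c^2) = c*r^2 + a*(T*c*l)" using E1 by (simp add: algebra_simps)
  also have "\<dots> = c*r^2 + \<rho>*a^3" using E2 by (simp add: power2_eq_square power3_eq_cube)
  finally have B: "c*(\<rho>*c^2) = c*r^2 + \<rho>*a^3" .
  have "c*(\<rho>^3*c^2) = \<rho>^2*(c*(\<rho>*c^2))" by (simp add: power2_eq_square power3_eq_cube)
  also have "\<dots> = c*(\<rho>^2*r^2) + \<rho>^3*a^3" unfolding B by (simp add: power2_eq_square power3_eq_cube algebra_simps)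
  also have "\<dots> = c*(\<rho>^2*r^2 + T^2*c^2)" unfolding A by (simp add: power2_eq_square power3_eq_cube algebra_simps)
  finally have "\<rho>^3*c^2 = \<rho>^2*r^2 + T^2*c^2" using pos by simp
  thus "\<rho>^2*r^2 = c^2*(\<rho>^3 - T^2)" by (simp add: algebra_simps)
qed


theorem lemma4p1:
  fixes t :: nat and \<rho> :: real and y :: "bvert \<Rightarrow> real"
  assumes "t \<ge> 1"
    and "principal_eigenpair 3 (bowtie_V t) (bowtie_E t) \<rho> y"
  shows "spectral_rank_one (bowtie_V t) y = {R 1, R 2} \<longleftrightarrow>
         real t < \<rho> * sqrt (\<rho> - 1) - 1"
proof -
  let ?V = "bowtie_V t"
  have pos: "\<And>v. v \<in> ?V \<Longrightarrow> y v > 0" and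
    eig: "\<And>i. i \<in> ?V \<Longrightarrow> \<rho> * y i ^ 2 = (\<Sum>e\<in>{e\<in>bowtie_E t. i \<in> e}. \<Prod>u\<in>e - {i}. y u)"
    using assms(2) unfolding principal_eigenpair_def by auto
  have VC: "C \<in> ?V" unfolding bowtie_V_def by auto
  have VL: "\<And>j. 1 \<le> j \<Longrightarrow> j \<le> t+2 \<Longrightarrow> L j \<in> ?V" unfolding bowtie_V_def by auto
  have VR: "\<And>j. 1 \<le> j \<Longrightarrow> j \<le> t+2 \<Longrightarrow> R j \<in> ?V" unfolding bowtie_V_def by auto
  have Vcases: "\<And>v. v \<in> ?V \<Longrightarrow> v = C \<or> (\<exists>j. 1\<le>j \<and> j\<le>t+2 \<and> (v = L j \<or> v = R j))"
    unfolding bowtie_V_def by auto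
  define c where "c = y C"
  define a where "a = y (L 1)"
  define l where "l = y (L 2)"
  define r where "r = y (R 1)"
  define r2 where "r2 = y (R 2)"
  define s where "s = y (R 3)"
  have cp: "c > 0" unfolding c_def using pos VC by auto
  have ap: "a > 0" unfolding a_def using pos VL by auto
  have lp: "l > 0" unfolding l_def using pos VL by auto
  have rp: "r > 0" unfolding r_def using pos VR by auto
  have r2p: "r2 > 0" unfolding r2_def using pos VR by auto
  have sp: "s > 0" unfolding s_def using pos VR assms(1) by auto
  have eqLj: "\<And>j. 2 \<le> j \<Longrightarrow> j \<le> t+2 \<Longrightarrow> \<rho> * y (L j)^2 = c * a"
  proof -
    fix j :: nat assume j: "2 \<le> j" "j \<le> t+2"
    have "L j \<in> ?V" using j by (intro VL) auto
    from eig[OF this] sum_Lj[OF j, of y] show "\<rho> * y (L j)^2 = c * a" by (simp add: c_def a_def)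
  qed
  have eqRj: "\<And>j. 3 \<le> j \<Longrightarrow> j \<le> t+2 \<Longrightarrow> \<rho> * y (R j)^2 = r * r2"
  proof -
    fix j :: nat assume j: "3 \<le> j" "j \<le> t+2"
    have "R j \<in> ?V" using j by (intro VR) auto
    from eig[OF this] sum_Rj[OF j, of y] show "\<rho> * y (R j)^2 = r * r2" by (simp add: r_def r2_def)
  qed
  have E3: "\<rho> * l^2 = c * a" unfolding l_def using eqLj by simp
  have rhop: "\<rho> > 0"
  proof (rule ccontr)
    assume "\<not> \<rho> > 0"
    hence "\<rho> * l^2 \<le> 0" by (simp add: mult_nonpos_nonneg)
    with E3 cp ap show False by (metis mult_pos_pos not_le)
  qed
  have Leq: "\<And>j. 2 \<le> j \<Longrightarrow> j \<le> t+2 \<Longrightarrow> y (L j) = l"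
  proof -
    fix j assume j: "2 \<le> j" "j \<le> t+2"
    have "\<rho> * y (L j)^2 = \<rho> * l^2" using eqLj[OF j] E3 by simp
    hence "y (L j)^2 = l^2" using rhop by simp
    thus "y (L j) = l" using pos[OF VL] j lp by (simp add: power2_eq_iff_nonneg less_imp_le)
  qed
  have E5': "\<rho> * s^2 = r * r2" unfolding s_def using eqRj assms(1) by simp
  have Req: "\<And>j. 3 \<le> j \<Longrightarrow> j \<le> t+2 \<Longrightarrow> y (R j) = s"
  proof -
    fix j assume j: "3 \<le> j" "j \<le> t+2"
    have "\<rho> * y (R j)^2 = \<rho> * s^2" using eqRj[OF j] E5' by simp
    hence "y (R j)^2 = s^2" using rhop by simp
    thus "y (R j) = s" using pos[OF VR] j sp by (simp add: power2_eq_iff_nonneg less_imp_le)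
  qed
  have sumL: "(\<Sum>j=2..t+2. y (L 1) * y (L j)) = (real t + 1) * a * l"
  proof -
    have "(\<Sum>j=2..t+2. y (L 1) * y (L j)) = (\<Sum>j=2..t+2. a * l)"
      by (rule sum.cong) (auto simp: Leq a_def)
    thus ?thesis by simp
  qed
  have sumL1: "(\<Sum>j=2..t+2. y C * y (L j)) = (real t + 1) * c * l"
  proof -
    have "(\<Sum>j=2..t+2. y C * y (L j)) = (\<Sum>j=2..t+2. c * l)"
      by (rule sum.cong) (auto simp: Leq c_def)
    thus ?thesis by simp
  qed
  have sumR1: "(\<Sum>j=3..t+2. y (R 2) * y (R j)) = real t * r2 * s"
  proof -
    have "(\<Sum>j=3..t+2. y (R 2) * y (R j)) = (\<Sum>j=3..t+2. r2 * s)"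
      by (rule sum.cong) (auto simp: Req r2_def)
    thus ?thesis by simp
  qed
  have sumR2: "(\<Sum>j=3..t+2. y (R 1) * y (R j)) = real t * r * s"
  proof -
    have "(\<Sum>j=3..t+2. y (R 1) * y (R j)) = (\<Sum>j=3..t+2. r * s)"
      by (rule sum.cong) (auto simp: Req r_def)
    thus ?thesis by simp
  qed
  have E1': "\<rho> * c^2 = r * r2 + (real t + 1) * a * l"
    using eig[OF VC] unfolding sum_C sumL by (simp add: c_def r_def r2_def)
  have E2: "\<rho> * a^2 = (real t + 1) * c * l"
    using eig[OF VL[of 1]] unfolding sum_L1 sumL1 by (simp add: a_def)
  have ER1: "\<rho> * r^2 = r2 * (c + real t * s)"
    using eig[OF VR[of 1]] unfolding sum_R1 sumR1 by (simp add: c_def r_def r2_def algebra_simps)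
  have ER2: "\<rho> * r2^2 = r * (c + real t * s)"
    using eig[OF VR[of 2]] unfolding sum_R2 sumR2 by (simp add: c_def r_def r2_def algebra_simps)
  have "\<rho> * r^3 = \<rho> * r2^3"
  proof -
    have "\<rho> * r^3 = r * (\<rho> * r^2)" by (simp add: power2_eq_square power3_eq_cube)
    also have "\<dots> = r2 * (\<rho> * r2^2)" unfolding ER1 ER2 by simp
    also have "\<dots> = \<rho> * r2^3" by (simp add: power2_eq_square power3_eq_cube)
    finally show ?thesis .
  qed
  hence "r^3 = r2^3" using rhop by simp
  hence rr: "r2 = r" using rp r2p by (simp add: power_eq_iff_eq_base less_imp_le)
  have E1: "\<rho> * c^2 = r^2 + (real t + 1) * a * l" using E1' rr by (simp add: power2_eq_square)
  have E5: "\<rho> * s^2 = r^2" using E5' rr by (simp add: power2_eq_square)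
  define T where "T = real t + 1"
  have A: "\<rho>^3*a^3 = T^2*c^3" and K: "\<rho>^2*r^2 = c^2*(\<rho>^3 - T^2)"
    using alg[OF cp ap lp rhop, of r T] E1 E2 E3 unfolding T_def by auto
  have Tp: "T > 0" unfolding T_def by simp
  have key: "c < r \<longleftrightarrow> T^2 < \<rho>^2 * (\<rho> - 1)"
  proof -
    have "c < r \<longleftrightarrow> c^2 < r^2" using cp rp by (metis less_imp_le power_less_imp_less_base power_strict_mono zero_less_numeral)
    also have "\<dots> \<longleftrightarrow> \<rho>^2 * c^2 < \<rho>^2 * r^2" using rhop by simp
    also have "\<dots> \<longleftrightarrow> c^2 * \<rho>^2 < c^2 * (\<rho>^3 - T^2)" unfolding K by (simp add: mult.commute)
    also have "\<dots> \<longleftrightarrow> \<rho>^2 < \<rho>^3 - T^2" using cp by simp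
    also have "\<dots> \<longleftrightarrow> T^2 < \<rho>^2 * (\<rho> - 1)" by (simp add: algebra_simps power2_eq_square power3_eq_cube)
    finally show ?thesis .
  qed
  have key2: "real t < \<rho> * sqrt (\<rho> - 1) - 1 \<longleftrightarrow> T^2 < \<rho>^2 * (\<rho> - 1)"
  proof -
    have "real t < \<rho> * sqrt (\<rho> - 1) - 1 \<longleftrightarrow> T / \<rho> < sqrt (\<rho> - 1)"
      unfolding T_def using rhop by (simp add: field_simps)
    also have "\<dots> \<longleftrightarrow> (T/\<rho>)^2 < \<rho> - 1" using sqrt_lt Tp rhop by simp
    also have "\<dots> \<longleftrightarrow> T^2 < \<rho>^2 * (\<rho> - 1)" using rhop by (simp add: power_divide field_simps)
    finally show ?thesis .
  qed
  have main: "spectral_rank_one ?V y = {R 1, R 2} \<longleftrightarrow> c < r"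
  proof
    assume H: "spectral_rank_one ?V y = {R 1, R 2}"
    hence "R 1 \<in> spectral_rank_one ?V y" by simp
    hence m: "\<forall>u\<in>?V. y u \<le> r" unfolding spectral_rank_one_def r_def by simp
    have "C \<notin> spectral_rank_one ?V y" using H by simp
    then obtain u where "u \<in> ?V" "\<not> y u \<le> c" using VC unfolding spectral_rank_one_def c_def by auto
    with m show "c < r" by force
  next
    assume cr: "c < r"
    have T2: "T^2 < \<rho>^3"
    proof -
      have "T^2 < \<rho>^2 * (\<rho> - 1)" using key cr by simp
      also have "\<dots> < \<rho>^3" using rhop by (simp add: algebra_simps power2_eq_square power3_eq_cube)
      finally show ?thesis .
    qed
    have rho1: "\<rho> > 1"
    proof -
      have "0 < T^2" using Tp by simp
      also have "T^2 < \<rho>^2 * (\<rho> - 1)" using key cr by simp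
      finally have "0 < \<rho> - 1" using rhop by (simp add: zero_less_mult_iff)
      thus ?thesis by simp
    qed
    have ac: "a < c"
    proof -
      have "\<rho>^3*a^3 < \<rho>^3*c^3" unfolding A using T2 cp by simp
      hence "a^3 < c^3" using rhop by simp
      thus ?thesis using ap cp by (meson less_imp_le power_less_imp_less_base)
    qed
    have lc: "l < c"
    proof -
      have "\<rho> * l^2 < c^2" unfolding E3 using ac cp by (simp add: power2_eq_square)
      moreover have "l^2 \<le> \<rho> * l^2" using rho1 mult_right_mono[of 1 \<rho> "l^2"] by simp
      ultimately have "l^2 < c^2" by simp
      thus ?thesis using lp cp by (meson less_imp_le power_less_imp_less_base)
    qed
    have sr: "s < r"
    proof -
      have "s^2 < \<rho> * s^2" using rho1 sp by simp
      hence "s^2 < r^2" using E5 by simp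
      thus ?thesis using sp rp by (meson less_imp_le power_less_imp_less_base)
    qed
    have bound: "\<And>v. v \<in> ?V \<Longrightarrow> y v \<le> r \<and> (v \<notin> {R 1, R 2} \<longrightarrow> y v < r)"
    proof -
      fix v assume v: "v \<in> ?V"
      from Vcases[OF v] show "y v \<le> r \<and> (v \<notin> {R 1, R 2} \<longrightarrow> y v < r)"
      proof (elim disjE exE conjE)
        assume "v = C" thus ?thesis using cr c_def by simp
      next
        fix j assume j: "1 \<le> j" "j \<le> t+2" "v = L j"
        show ?thesis
        proof (cases "j = 1")
          case True thus ?thesis using j ac cr a_def by simp
        next
          case False thus ?thesis using j Leq[of j] lc cr by simp
        qed
      next
        fix j assume j: "1 \<le> j" "j \<le> t+2" "v = R j"
        show ?thesis
        proof (cases "j \<le> 2")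
          case True
          hence "j = 1 \<or> j = 2" using j by auto
          thus ?thesis using j rr r_def r2_def by auto
        next
          case False thus ?thesis using j Req[of j] sr by simp
        qed
      qed
    qed
    have VR12: "R 1 \<in> ?V" "R 2 \<in> ?V" using VR assms(1) by auto
    show "spectral_rank_one ?V y = {R 1, R 2}"
    proof (rule set_eqI)
      fix v show "v \<in> spectral_rank_one ?V y \<longleftrightarrow> v \<in> {R 1, R 2}"
      proof
        assume "v \<in> spectral_rank_one ?V y"
        hence v: "v \<in> ?V" and "y (R 1) \<le> y v" using VR12 unfolding spectral_rank_one_def by auto
        thus "v \<in> {R 1, R 2}" using bound[OF v] r_def by force
      next
        assume "v \<in> {R 1, R 2}"
        hence "v \<in> ?V" "y v = r" using VR12 rr r_def r2_def by auto
        thus "v \<in> spectral_rank_one ?V y" using bound unfolding spectral_rank_one_def by auto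
      qed
    qed
  qed
  show ?thesis using main key key2 by simp
qed

end
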